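(* Let $\langle l,m\rangle$ be a type. The number of strict equivalence classes of surjective characters $U_1\to\mathbb{Z}/p^2\mathbb{Z}$ of type $\langle l,m\rangle$ is at most $$B(p,l,m)=p^k(p-1)^{\epsilon},$$ where $k$ is the number of integers in $[m-l,m-1]$ not divisible by $p$, and $\epsilon=1$ if $p\mid m$ and $\epsilon=2$ otherwise. (Here $B(p,l,m)$ is the number of reduced forms $x_l\mathfrak{Z}_l+\sum_{m-l\le j\le m,\,p\nmid j}b_j\cdot p\,\mathfrak{Z}_j$ with $x_l\in\{1,\dots,p-1\}$, $b_j\in\{0,\dots,p-1\}$, and $b_m\in\{1,\dots,p-1\}$ when $p\nmid m$.)
   Context: Let $p$ be a prime, $U_1=1+t\mathbb{F}_p[[t]]$, $U_j=1+t^j\mathbb{F}_p[[t]]$, with the $t$-adic topology. The Nottingham group $\mathcal{N}$ over $\mathbb{F}_p$ is the set of power series $u(t)=t(1+c_1t+\cdots)$, $c_i\in\mathbb{F}_p$, under composition. A character is a continuous homomorphism $\chi:U_1\to\mathbb{Z}/p^2\mathbb{Z}$; $\mathcal{N}$ acts by ${}_u\chi(f(t))=\chi(f(u(t)))$. Characters $\chi,\psi$ are strictly equivalent if $\psi={}_u\chi$ for some $u\in\mathcal{N}$ with $\chi(u(t)/t)=0$. A surjective character has type $\langle l,m\rangle$ where $l$ is the largest $b$ with $\chi(U_b)\not\subset p\mathbb{Z}/p^2\mathbb{Z}$ and $m$ the largest $b$ with $\chi(U_b)\ne0$. Put $E_j=1+t^j$; the $E_j$ with $p\nmid j$ form a topological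 $\mathbb{Z}_p$-basis of $U_1$, and for $p\nmid j$, $\mathfrak{Z}_j$ is the character with $\mathfrak{Z}_j(E_i)=\delta_{ij}$ for $p\nmid i$. *)

theory Defs
  imports "HOL-Computational_Algebra.Formal_Power_Series" "HOL-Computational_Algebra.Primes"
begin

text \<open>The base field F_p is modelled by a finite field type 'a with CARD('a) = p (p prime).
  Power series over F_p are elements of 'a fps; t is fps_X.\<close>

definition Uj :: "nat \<Rightarrow> ('a::field) fps set" where
  "Uj j = {f. fps_nth f 0 = 1 \<and> (\<forall>i. 0 < i \<and> i < j \<longrightarrow> fps_nth f i = 0)}"

definition nottingham :: "('a::field) fps set" where
  "nottingham = {u. fps_nth u 0 = 0 \<and> fps_nth u 1 = 1}"

text \<open>Characters U_1 -> Z/p^2Z, values represented in {0..<p^2}; extensional (0 off U_1).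
  Continuity for the t-adic topology with discrete target = local constancy.\<close>
definition is_character :: "nat \<Rightarrow> (('a::field) fps \<Rightarrow> int) \<Rightarrow> bool" where
  "is_character p \<chi> \<longleftrightarrow>
     (\<forall>f. f \<notin> Uj 1 \<longrightarrow> \<chi> f = 0) \<and>
     (\<forall>f\<in>Uj 1. 0 \<le> \<chi> f \<and> \<chi> f < int p ^ 2) \<and>
     (\<forall>f\<in>Uj 1. \<forall>g\<in>Uj 1. \<chi> (f * g) = (\<chi> f + \<chi> g) mod (int p ^ 2)) \<and>
     (\<forall>f\<in>Uj 1. \<exists>j. \<forall>g\<in>Uj 1. (\<forall>i<j. fps_nth g i = fps_nth f i) \<longrightarrow> \<chi> g = \<chi> f)"

definition surjective_character :: "nat \<Rightarrow> (('a::field) fps \<Rightarrow> int) \<Rightarrow> bool" where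
  "surjective_character p \<chi> \<longleftrightarrow> is_character p \<chi> \<and> \<chi> ` Uj 1 = {0..<int p ^ 2}"

definition act :: "('a::field) fps \<Rightarrow> ('a fps \<Rightarrow> int) \<Rightarrow> ('a fps \<Rightarrow> int)" where
  "act u \<chi> = (\<lambda>f. if f \<in> Uj 1 then \<chi> (f oo u) else 0)"

definition strictly_equiv :: "(('a::field) fps \<Rightarrow> int) \<Rightarrow> ('a fps \<Rightarrow> int) \<Rightarrow> bool" where
  "strictly_equiv \<chi> \<psi> \<longleftrightarrow> (\<exists>u\<in>nottingham. \<chi> (fps_shift 1 u) = 0 \<and> \<psi> = act u \<chi>)"

definition has_type :: "nat \<Rightarrow> (('a::field) fps \<Rightarrow> int) \<Rightarrow> nat \<Rightarrow> nat \<Rightarrow> bool" where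
  "has_type p \<chi> l m \<longleftrightarrow>
     l \<ge> 1 \<and> (\<exists>f\<in>Uj l. \<not> int p dvd \<chi> f) \<and> (\<forall>b>l. \<forall>f\<in>Uj b. int p dvd \<chi> f) \<and>
     m \<ge> 1 \<and> (\<exists>f\<in>Uj m. \<chi> f \<noteq> 0) \<and> (\<forall>b>m. \<forall>f\<in>Uj b. \<chi> f = 0)"

definition surj_chars_of_type :: "nat \<Rightarrow> nat \<Rightarrow> nat \<Rightarrow> (('a::field) fps \<Rightarrow> int) set" where
  "surj_chars_of_type p l m = {\<chi>. surjective_character p \<chi> \<and> has_type p \<chi> l m}"

definition bound_B :: "nat \<Rightarrow> nat \<Rightarrow> nat \<Rightarrow> nat" where
  "bound_B p l m = p ^ card {j \<in> {m - l..m - 1}. \<not> p dvd j} * (p - 1) ^ (if p dvd m then 1 else 2)"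

end

theory Submission
  imports Defs "HOL-Number_Theory.Residues" "HOL-Library.FuncSet"
begin
unbundle fps_syntax


definition E :: "nat \<Rightarrow> 'a::field fps" where "E i = 1 + fps_X ^ i"
definition lowz :: "nat \<Rightarrow> 'a::field fps \<Rightarrow> bool" where "lowz k f \<longleftrightarrow> (\<forall>n<k. f $ n = 0)"

lemma lowz_mult: assumes "lowz a f" "lowz b g" shows "lowz (a+b) (f*g)"
  unfolding lowz_def fps_mult_nth
proof (intro allI impI sum.neutral ballI)
  fix n i assume n: "n < a + b" and i: "i \<in> {0..n}"
  show "f $ i * g $ (n - i) = 0"
  proof (cases "i < a")
    case True then show ?thesis using assms(1) by (simp add: lowz_def)
  next
    case False then have "n - i < b" using n i by auto
    then show ?thesis using assms(2) by (simp add: lowz_def)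
  qed
qed

lemma lowz_multL: "lowz a f \<Longrightarrow> lowz a (f*g)"
  using lowz_mult[of a f 0 g] by (simp add: lowz_def)
lemma lowz_multR: "lowz a g \<Longrightarrow> lowz a (f*g)"
  using lowz_mult[of 0 f a g] by (simp add: lowz_def)
lemma lowz_add: "lowz a f \<Longrightarrow> lowz a g \<Longrightarrow> lowz a (f+g)" by (simp add: lowz_def)
lemma lowz_diff: "lowz a f \<Longrightarrow> lowz a g \<Longrightarrow> lowz a (f-g)" by (simp add: lowz_def)
lemma lowz_mono: "lowz a f \<Longrightarrow> b \<le> a \<Longrightarrow> lowz b f" by (simp add: lowz_def)
lemma lowz_lead: assumes "lowz a f" "lowz b g" shows "(f*g) $ (a+b) = f $ a * g $ b"
proof -
  have "(f*g) $ (a+b) = (\<Sum>i\<in>{a}. f $ i * g $ (a+b-i))"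
    unfolding fps_mult_nth
  proof (intro sum.mono_neutral_right ballI)
    fix i assume i: "i \<in> {0..a + b} - {a}"
    show "f $ i * g $ (a + b - i) = 0"
    proof (cases "i < a")
      case True then show ?thesis using assms(1) by (simp add: lowz_def)
    next
      case False then have "a + b - i < b" using i by auto
      then show ?thesis using assms(2) by (simp add: lowz_def)
    qed
  qed auto
  then show ?thesis by simp
qed

lemma U_lowz: "f \<in> Uj i \<longleftrightarrow> f $ 0 = 1 \<and> lowz i (f - 1)"
proof
  assume "f \<in> Uj i" then show "f $ 0 = 1 \<and> lowz i (f - 1)"
    unfolding Uj_def lowz_def by (auto simp: gr0_conv_Suc)
next
  assume "f $ 0 = 1 \<and> lowz i (f - 1)" then show "f \<in> Uj i"
    unfolding Uj_def lowz_def by auto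
qed

lemma Uj_mult: assumes "f \<in> Uj i" "g \<in> Uj i" shows "f*g \<in> Uj i"
proof -
  have eq: "f*g - 1 = (f-1)*g + (g-1)" by (simp add: algebra_simps)
  have "lowz i ((f-1)*g + (g-1))" using assms
    by (intro lowz_add lowz_multL) (auto simp: U_lowz)
  hence "lowz i (f*g - 1)" by (subst eq)
  moreover have "(f*g) $ 0 = 1" using assms by (simp add: U_lowz)
  ultimately show ?thesis by (simp add: U_lowz)
qed

lemma Uj_coeff_mult: assumes "f \<in> Uj i" "g \<in> Uj i" "1 \<le> i" shows "(f*g) $ i = f $ i + g $ i"
proof (cases "i = 0")
  case True then show ?thesis using assms by (simp add: U_lowz)
next
  case False
  have "f*g = (f-1)*g + (g-1) + 1" by (simp add: algebra_simps)
  hence "(f*g) $ i = ((f-1)*g) $ (i+0) + (g-1) $ i" using False by simp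
  also have "((f-1)*g) $ (i+0) = (f-1) $ i * g $ 0"
    using assms by (intro lowz_lead) (auto simp: U_lowz lowz_def)
  finally show ?thesis using assms False by (simp add: U_lowz)
qed

lemma Uj_inverse: assumes "f \<in> Uj i" shows "inverse f \<in> Uj i"
proof -
  have f0: "f $ 0 = 1" using assms by (simp add: U_lowz)
  have "inverse f - 1 = (1 - f) * inverse f"
    using inverse_mult_eq_1[of f] f0 by (simp add: algebra_simps)
  moreover have "lowz i ((1 - f) * inverse f)"
    using assms by (intro lowz_multL) (auto simp: U_lowz lowz_def)
  ultimately show ?thesis using f0 by (simp add: U_lowz)
qed

lemma Uj_anti: "i \<le> j \<Longrightarrow> Uj j \<subseteq> Uj i"
  by (auto simp: U_lowz intro: lowz_mono)

lemma Uj_one: "1 \<in> Uj i" by (simp add: U_lowz lowz_def)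

lemma Uj_pow: "f \<in> Uj i \<Longrightarrow> f ^ n \<in> Uj i"
  by (induction n) (auto simp: Uj_one Uj_mult)

lemma E_in: "1 \<le> i \<Longrightarrow> E i \<in> Uj i"
  by (auto simp: U_lowz lowz_def E_def)

lemma E_coeff: "1 \<le> i \<Longrightarrow> (E i :: 'a::field fps) $ i = 1"
  by (simp add: E_def)

lemma E_pow_coeff: assumes "1 \<le> i" shows "((E i :: 'a::field fps)^n) $ i = of_nat n"
proof (induction n)
  case 0 then show ?case using assms by simp
next
  case (Suc n)
  have "((E i :: 'a fps)^Suc n) $ i = (E i * E i ^ n) $ i" by simp
  also have "\<dots> = (E i) $ i + (E i ^ n) $ i"
    using assms by (intro Uj_coeff_mult E_in Uj_pow) auto
  finally show ?case using Suc assms by (simp add: E_coeff)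
qed

lemma quot_lemma: assumes "a \<in> Uj i" "b \<in> Uj i" "a $ i = b $ i" shows "a * inverse b \<in> Uj (Suc i)"
proof -
  have b0: "b $ 0 = 1" using assms by (simp add: U_lowz)
  have "a * inverse b - 1 = (a - b) * inverse b"
    using inverse_mult_eq_1[of b] b0 by (simp add: algebra_simps)
  moreover have "lowz (Suc i) (a - b)"
    using assms unfolding U_lowz lowz_def
    by (auto simp: less_Suc_eq)
  ultimately show ?thesis using b0 assms
    by (auto simp: U_lowz intro!: lowz_multL)
qed

lemma level: fixes f :: "'a::field fps" assumes "1 \<le> i" "f \<in> Uj i" "of_nat n = f $ i"
  shows "\<exists>g\<in>Uj (Suc i). f = (E i)^n * g"
proof -
  let ?e = "(E i :: 'a fps)^n"
  have e: "?e \<in> Uj i" by (intro Uj_pow E_in assms)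
  have e0: "?e  $ 0 = 1" using e by (simp add: U_lowz)
  have "f * inverse ?e \<in> Uj (Suc i)"
    using assms e by (intro quot_lemma) (auto simp: E_pow_coeff)
  moreover have "f = ?e * (f * inverse ?e)"
    using inverse_mult_eq_1[of ?e] e0 by (simp add: algebra_simps)
  ultimately show ?thesis by blast
qed


definition charhom :: "nat \<Rightarrow> ('a::field fps \<Rightarrow> int) \<Rightarrow> bool" where
 "charhom p \<chi> \<longleftrightarrow> (\<forall>f. f \<notin> Uj 1 \<longrightarrow> \<chi> f = 0) \<and> (\<forall>f\<in>Uj 1. 0 \<le> \<chi> f \<and> \<chi> f < int p ^ 2) \<and>
    (\<forall>f\<in>Uj 1. \<forall>g\<in>Uj 1. \<chi> (f * g) = (\<chi> f + \<chi> g) mod (int p ^ 2))"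

context
  fixes p :: nat
  assumes P: "prime p" and C: "card (UNIV :: 'a::{field,finite} set) = p"
begin

lemma CHAR_p: "CHAR('a) = p"
proof -
  have "CHAR('a) dvd p" using CHAR_dvd_CARD[where 'a='a] C by simp
  moreover have "CHAR('a) \<noteq> Suc 0" using CHAR_not_1' by simp
  moreover have "\<forall>m. m dvd p \<longrightarrow> m = 1 \<or> m = p" using P unfolding prime_nat_iff by blast
  ultimately show ?thesis by auto
qed

lemma ofnat_eq: "(of_nat a :: 'a) = of_nat b \<longleftrightarrow> [a = b] (mod p)"
  using of_nat_eq_iff_cong_CHAR[where 'a='a] CHAR_p by simp

lemma ofnat_surj: "\<exists>n. (of_nat n :: 'a) = c"
proof -
  have inj: "inj_on (of_nat :: nat \<Rightarrow> 'a) {..<p}"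
    by (auto intro!: inj_onI simp: ofnat_eq cong_def)
  have "card ((of_nat :: nat \<Rightarrow> 'a) ` {..<p}) = p" using card_image[OF inj] by simp
  hence "(of_nat :: nat \<Rightarrow> 'a) ` {..<p} = UNIV"
    using C by (intro card_subset_eq) auto
  then show ?thesis by (metis UNIV_I imageE)
qed

lemma frob: "(1 + x :: 'a fps) ^ p = 1 + x ^ p"
proof -
  have "prime CHAR('a fps)" using CHAR_p P by simp
  moreover have "p = CHAR('a fps)" using CHAR_p by simp
  ultimately show ?thesis using freshmans_dream[of p "1::'a fps" x] by simp
qed

lemma E_frob: "(E i :: 'a fps) ^ p = E (p * i)"
  unfolding E_def frob by (simp add: power_mult[symmetric] mult.commute)

end

lemma p_pos: "prime p \<Longrightarrow> 0 < int p ^ 2" using prime_gt_0_nat by simp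

context
  fixes p :: nat and \<chi> :: "'a::field fps \<Rightarrow> int"
  assumes P: "prime p" and H: "charhom p \<chi>"
begin

lemma ch_zero: "f \<notin> Uj 1 \<Longrightarrow> \<chi> f = 0" using H by (simp add: charhom_def)
lemma ch_range: "f \<in> Uj 1 \<Longrightarrow> 0 \<le> \<chi> f \<and> \<chi> f < int p ^ 2" using H by (simp add: charhom_def)
lemma ch_mul: "f \<in> Uj 1 \<Longrightarrow> g \<in> Uj 1 \<Longrightarrow> \<chi> (f * g) = (\<chi> f + \<chi> g) mod (int p ^ 2)"
  using H by (simp add: charhom_def)
lemma ch_range': "0 \<le> \<chi> f \<and> \<chi> f < int p ^ 2"
  using ch_range[of f] ch_zero[of f] p_pos[OF P] by (cases "f \<in> Uj 1") auto
lemma ch_mod: "\<chi> f mod (int p ^ 2) = \<chi> f"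
  using ch_range' by simp

lemma ch_one: "\<chi> 1 = 0"
proof -
  have "\<chi> 1 = (\<chi> 1 + \<chi> 1) mod (int p ^ 2)" using ch_mul[OF Uj_one Uj_one] by simp
  hence "(\<chi> 1 + \<chi> 1) mod (int p ^ 2) = (\<chi> 1 + 0) mod (int p ^ 2)" using ch_mod[of 1] by simp
  hence "int p ^ 2 dvd (\<chi> 1 + \<chi> 1) - (\<chi> 1 + 0)" by (simp only: mod_eq_dvd_iff)
  hence "int p ^ 2 dvd \<chi> 1" by simp
  then obtain k where k: "\<chi> 1 = int p ^ 2 * k" by blast
  have "0 \<le> int p ^ 2 * k" "int p ^ 2 * k < int p ^ 2" using ch_range'[of 1] k by auto
  moreover have "0 < int p ^ 2" using p_pos[OF P] .
  ultimately have "0 \<le> k" "k < 1" by (auto simp: zero_le_mult_iff)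
  hence "k = 0" by simp
  thus ?thesis using k by simp
qed

lemma ch_pow: "f \<in> Uj 1 \<Longrightarrow> \<chi> (f ^ n) = (int n * \<chi> f) mod (int p ^ 2)"
proof (induction n)
  case 0 then show ?case by (simp add: ch_one)
next
  case (Suc n)
  have "\<chi> (f ^ Suc n) = (\<chi> f + \<chi> (f^n)) mod (int p ^ 2)" using ch_mul[OF Suc.prems Uj_pow[OF Suc.prems]] by simp
  also have "\<dots> = (\<chi> f + int n * \<chi> f) mod (int p ^ 2)" using Suc by (simp add: mod_add_right_eq)
  finally show ?case by (simp add: algebra_simps)
qed

lemma ch_inv: "f \<in> Uj 1 \<Longrightarrow> \<chi> (inverse f) = (- \<chi> f) mod (int p ^ 2)"
proof -
  assume f: "f \<in> Uj 1"
  have f0: "f $ 0 = 1" using f by (simp add: U_lowz)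
  have "0 = \<chi> (f * inverse f)" using inverse_mult_eq_1[of f] f0 ch_one by (simp add: mult.commute)
  also have "\<dots> = (\<chi> f + \<chi> (inverse f)) mod (int p ^ 2)" using ch_mul f Uj_inverse by blast
  finally have "(\<chi> (inverse f) + \<chi> f) mod (int p ^ 2) = 0" by (simp add: add.commute)
  hence "(\<chi> (inverse f) + \<chi> f) mod (int p ^ 2) = 0 mod (int p ^ 2)" by simp
  hence "int p ^ 2 dvd (\<chi> (inverse f) + \<chi> f) - 0" by (simp only: mod_eq_dvd_iff)
  hence "int p ^ 2 dvd \<chi> (inverse f) - (- \<chi> f)" by simp
  hence "\<chi> (inverse f) mod (int p ^ 2) = (- \<chi> f) mod (int p ^ 2)" by (simp only: mod_eq_dvd_iff)
  thus ?thesis using ch_mod[of "inverse f"] by simp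
qed

end


lemma Uj_pow_coeff: assumes "h \<in> Uj k" "1 \<le> k" shows "(h ^ n) $ k = of_nat n * h $ k"
proof (induction n)
  case 0 then show ?case using assms by simp
next
  case (Suc n)
  have "(h ^ Suc n) $ k = (h * h ^ n) $ k" by simp
  also have "\<dots> = h $ k + (h ^ n) $ k" using assms by (intro Uj_coeff_mult Uj_pow) auto
  finally show ?case using Suc by (simp add: algebra_simps)
qed

lemma effect_D:
  fixes f h :: "'a::field fps"
  assumes f: "f \<in> Uj i" and i: "1 \<le> i" and h: "h \<in> Uj k" and k: "1 \<le> k"
  shows "lowz (i+k) ((f oo (fps_X * h)) - f) \<and> ((f oo (fps_X * h)) - f) $ (i+k) = f $ i * (of_nat i * h $ k)"
proof -
  define w where "w n = h ^ n - 1" for n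
  have wl: "lowz k (w n)" for n using Uj_pow[OF h, of n] by (simp add: U_lowz w_def)
  have wk: "w n $ k = of_nat n * h $ k" for n using Uj_pow_coeff[OF h k] k by (simp add: w_def)
  have w0: "w 0 = 0" by (simp add: w_def)
  have fz: "f $ n = 0" if "0 < n" "n < i" for n using f that by (simp add: Uj_def)
  define T where "T N n = f $ n * (if N < n then 0 else w n $ (N - n))" for N n
  have D: "((f oo (fps_X * h)) - f) $ N = (\<Sum>n=0..N. T N n)" for N
  proof -
    have "(f oo (fps_X * h)) $ N = (\<Sum>n=0..N. f $ n * ((fps_X^n * h^n) $ N))"
      by (simp add: fps_compose_nth power_mult_distrib)
    moreover have "f $ N = (\<Sum>n=0..N. f $ n * ((fps_X^n * 1) $ N))"
    proof -
      have "(\<Sum>n=0..N. f $ n * ((fps_X^n * 1) $ N)) = (\<Sum>n=0..N. if n = N then f $ n else 0)"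
        by (intro sum.cong refl) (auto simp: fps_X_power_mult_nth)
      also have "\<dots> = f $ N" by simp
      finally show ?thesis by simp
    qed
    ultimately have "((f oo (fps_X * h)) - f) $ N = (\<Sum>n=0..N. f $ n * ((fps_X^n * h^n) $ N - (fps_X^n * 1) $ N))"
      by (simp only: fps_sub_nth sum_subtractf right_diff_distrib)
    also have "\<dots> = (\<Sum>n=0..N. T N n)"
      by (intro sum.cong refl) (simp add: T_def fps_X_power_mult_nth w_def algebra_simps)
    finally show ?thesis .
  qed
  have Tz: "T N n = 0" if "n \<noteq> i \<or> N < i + k" "N \<le> i + k" for N n
  proof (cases "N < n")
    case True then show ?thesis by (simp add: T_def)
  next
    case False
    show ?thesis
    proof (cases "n = 0")
      case True then show ?thesis using w0 by (simp add: T_def)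
    next
      case n0: False
      show ?thesis
      proof (cases "n < i")
        case True then show ?thesis using fz n0 by (simp add: T_def)
      next
        case False
        hence "N - n < k" using that \<open>\<not> N < n\<close> by auto
        then show ?thesis using wl[of n] \<open>\<not> N < n\<close> by (simp add: T_def lowz_def)
      qed
    qed
  qed
  have "lowz (i+k) ((f oo (fps_X * h)) - f)"
    unfolding lowz_def D by (auto intro!: sum.neutral Tz)
  moreover have "((f oo (fps_X * h)) - f) $ (i+k) = T (i+k) i"
    unfolding D by (subst sum.mono_neutral_right[of "{0..i+k}" "{i}"]) (auto intro: Tz)
  ultimately show ?thesis by (simp add: T_def wk)
qed

lemma effect:
  fixes f h :: "'a::field fps"
  assumes f: "f \<in> Uj i" and i: "1 \<le> i" and h: "h \<in> Uj k" and k: "1 \<le> k"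
  defines "g \<equiv> (f oo (fps_X * h)) * inverse f"
  shows "g \<in> Uj (i+k)" "g $ (i+k) = of_nat i * f $ i * h $ k" "f oo (fps_X * h) = f * g"
proof -
  have f0: "f $ 0 = 1" using f by (simp add: U_lowz)
  have fi: "f * inverse f = 1" using inverse_mult_eq_1[of f] f0 by (simp add: mult.commute)
  let ?D = "(f oo (fps_X * h)) - f"
  have eq: "g - 1 = ?D * inverse f" unfolding g_def left_diff_distrib fi ..
  have "lowz (i+k) (?D * inverse f)" using effect_D[OF assms(1-4)] by (intro lowz_multL) auto
  moreover have "g $ 0 = 1" unfolding g_def using f0 by (simp add: fps_mult_nth)
  ultimately show "g \<in> Uj (i+k)" using eq by (simp add: U_lowz)
  have "(?D * inverse f) $ ((i+k)+0) = ?D $ (i+k) * (inverse f) $ 0"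
    using effect_D[OF assms(1-4)] by (intro lowz_lead) (auto simp: lowz_def)
  hence "(g - 1) $ (i+k) = f $ i * (of_nat i * h $ k)" using eq effect_D[OF assms(1-4)] f0 by simp
  thus "g $ (i+k) = of_nat i * f $ i * h $ k" using i by (simp add: algebra_simps)
  show "f oo (fps_X * h) = f * g" unfolding g_def using fi by (simp add: algebra_simps)
qed

lemma nott_decomp: "u \<in> nottingham \<Longrightarrow> u = fps_X * fps_shift 1 u \<and> fps_shift 1 u \<in> Uj 1"
  unfolding nottingham_def
  by (auto simp: fps_eq_iff U_lowz lowz_def)

lemma nott_X_mult: "h \<in> Uj 1 \<Longrightarrow> fps_X * h \<in> nottingham"
  by (simp add: nottingham_def U_lowz)

lemma compose_Uj: assumes "f \<in> Uj i" "u \<in> nottingham" shows "f oo u \<in> Uj i"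
proof (cases "i = 0")
  case True then show ?thesis using assms by (simp add: U_lowz lowz_def)
next
  case False
  obtain h where h: "h \<in> Uj 1" "u = fps_X * h" using nott_decomp[OF assms(2)] by blast
  have i1: "1 \<le> i" using False by simp
  have "f oo u = f * ((f oo u) * inverse f)" "(f oo u) * inverse f \<in> Uj (i + 1)"
    using effect[OF assms(1) i1 h(1) le_refl] h(2) by auto
  then show ?thesis using Uj_mult[OF assms(1)] Uj_anti[of i "i+1"] by (metis subsetD le_add1)
qed

lemma X_mult_compose: fixes u a :: "'a::field fps" shows "u $ 0 = 0 \<Longrightarrow> (fps_X * a) oo u = u * (a oo u)"
  by (subst fps_compose_mult_distrib) (auto simp: fps_X_fps_compose_startby0)


lemma nott_0: "u \<in> nottingham \<Longrightarrow> u $ 0 = 0" by (simp add: nottingham_def)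

lemma shift_X_mult: "fps_shift 1 (fps_X * (a :: 'a::field fps)) = a"
  by (metis fps_shift_times_fps_X' mult.commute)

lemma X_in_nott: "(fps_X :: 'a::field fps) \<in> nottingham" by (simp add: nottingham_def)

context
  fixes p :: nat and \<chi> :: "'a::field fps \<Rightarrow> int"
  assumes P: "prime p" and H: "charhom p \<chi>"
begin

lemma act_charhom: assumes u: "u \<in> nottingham" shows "charhom p (act u \<chi>)"
  unfolding charhom_def
proof (intro conjI allI impI ballI)
  fix f show "f \<notin> Uj 1 \<Longrightarrow> act u \<chi> f = 0" by (simp add: act_def)
next
  fix f :: "'a fps" assume f: "f \<in> Uj 1"
  show "0 \<le> act u \<chi> f" using ch_range'[OF P H] f by (simp add: act_def)
next
  fix f :: "'a fps" assume f: "f \<in> Uj 1"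
  show "act u \<chi> f < int p ^ 2" using ch_range'[OF P H] f by (simp add: act_def)
next
  fix f g :: "'a fps" assume f: "f \<in> Uj 1" and g: "g \<in> Uj 1"
  have fg: "f * g \<in> Uj 1" using f g Uj_mult by blast
  have "(f * g) oo u = (f oo u) * (g oo u)" using fps_compose_mult_distrib[OF nott_0[OF u]] .
  moreover have "f oo u \<in> Uj 1" "g oo u \<in> Uj 1" using compose_Uj f g u by auto
  ultimately show "act u \<chi> (f * g) = (act u \<chi> f + act u \<chi> g) mod (int p ^ 2)"
    using ch_mul[OF P H] f g fg by (simp add: act_def)
qed

lemma se_refl: "strictly_equiv \<chi> \<chi>"
proof -
  have s: "fps_shift 1 (fps_X :: 'a fps) = 1" using shift_X_mult[of "1::'a fps"] by simp
  have "act fps_X \<chi> = \<chi>"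
    by (rule ext) (simp add: act_def ch_zero[OF P H])
  then show ?thesis unfolding strictly_equiv_def using X_in_nott s ch_one[OF P H] by metis
qed

lemma se_trans: assumes "strictly_equiv \<chi> \<psi>" "strictly_equiv \<psi> \<phi>" shows "strictly_equiv \<chi> \<phi>"
proof -
  obtain u where u: "u \<in> nottingham" "\<chi> (fps_shift 1 u) = 0" "\<psi> = act u \<chi>"
    using assms(1) unfolding strictly_equiv_def by blast
  obtain v where v: "v \<in> nottingham" "\<psi> (fps_shift 1 v) = 0" "\<phi> = act v \<psi>"
    using assms(2) unfolding strictly_equiv_def by blast
  define su where "su = fps_shift 1 u"
  define sv where "sv = fps_shift 1 v"
  have su: "u = fps_X * su" "su \<in> Uj 1" using nott_decomp[OF u(1)] su_def by auto
  have sv: "v = fps_X * sv" "sv \<in> Uj 1" using nott_decomp[OF v(1)] sv_def by auto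
  have u0: "u $ 0 = 0" using nott_0[OF u(1)] .
  have v0: "v $ 0 = 0" using nott_0[OF v(1)] .
  define w where "w = v oo u"
  have svu: "sv oo u \<in> Uj 1" using compose_Uj[OF sv(2) u(1)] .
  have w: "w = fps_X * (su * (sv oo u))"
    unfolding w_def by (subst sv(1), subst X_mult_compose[OF u0], subst su(1)) (simp add: mult.assoc)
  have ws: "fps_shift 1 w = su * (sv oo u)" unfolding w by (rule shift_X_mult)
  have wN: "w \<in> nottingham" unfolding w by (intro nott_X_mult Uj_mult su(2) svu)
  have "\<chi> (fps_shift 1 w) = (\<chi> su + \<chi> (sv oo u)) mod (int p ^ 2)"
    unfolding ws by (rule ch_mul[OF P H su(2) svu])
  also have "\<chi> (sv oo u) = \<psi> sv" using u(3) sv(2) by (simp add: act_def)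
  also have "\<psi> sv = 0" using v(2) sv_def by simp
  finally have c: "\<chi> (fps_shift 1 w) = 0" using u(2) su_def by simp
  have "\<phi> = act w \<chi>"
  proof (rule ext)
    fix f
    show "\<phi> f = act w \<chi> f"
    proof (cases "f \<in> Uj 1")
      case True
      have "f oo v \<in> Uj 1" using compose_Uj[OF True v(1)] .
      moreover have "f oo w = (f oo v) oo u" unfolding w_def by (rule fps_compose_assoc[OF u0 v0])
      ultimately show ?thesis using True u(3) v(3) by (simp add: act_def)
    qed (simp add: act_def u(3) v(3))
  qed
  then show ?thesis unfolding strictly_equiv_def using wN c by blast
qed

lemma se_sym: assumes "strictly_equiv \<chi> \<psi>" shows "strictly_equiv \<psi> \<chi>"
proof -
  obtain u where u: "u \<in> nottingham" "\<chi> (fps_shift 1 u) = 0" "\<psi> = act u \<chi>"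
    using assms(1) unfolding strictly_equiv_def by blast
  define su where "su = fps_shift 1 u"
  have su: "u = fps_X * su" "su \<in> Uj 1" using nott_decomp[OF u(1)] su_def by auto
  have u0: "u $ 0 = 0" using nott_0[OF u(1)] .
  have u1: "u $ 1 = 1" using u(1) by (simp add: nottingham_def)
  define w where "w = fps_inv u"
  have wN: "w \<in> nottingham" using u0 u1 unfolding w_def nottingham_def by (simp add: fps_inv_def)
  define sw where "sw = fps_shift 1 w"
  have sw: "w = fps_X * sw" "sw \<in> Uj 1" using nott_decomp[OF wN] sw_def by auto
  have w0: "w $ 0 = 0" using nott_0[OF wN] .
  have wu: "w oo u = fps_X" unfolding w_def by (rule fps_inv[OF u0]) (metis One_nat_def u1 one_neq_zero)
  have swu: "sw oo u \<in> Uj 1" using compose_Uj[OF sw(2) u(1)] .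
  have "fps_X * (su * (sw oo u)) = fps_X * 1"
    using wu by (subst (asm) sw(1), subst (asm) X_mult_compose[OF u0], subst (asm) su(1)) (simp add: mult.assoc)
  hence one: "su * (sw oo u) = 1" using shift_X_mult by metis
  have "0 = \<chi> (su * (sw oo u))" using one ch_one[OF P H] by simp
  also have "\<dots> = (\<chi> su + \<chi> (sw oo u)) mod (int p ^ 2)" by (rule ch_mul[OF P H su(2) swu])
  also have "\<dots> = \<chi> (sw oo u)" using u(2) su_def ch_mod[OF P H] by simp
  finally have c: "\<psi> (fps_shift 1 w) = 0" using u(3) sw_def sw(2) by (simp add: act_def)
  have "\<chi> = act w \<psi>"
  proof (rule ext)
    fix f
    show "\<chi> f = act w \<psi> f"
    proof (cases "f \<in> Uj 1")
      case True
      have "f oo w \<in> Uj 1" using compose_Uj[OF True wN] .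
      moreover have "(f oo w) oo u = f" using fps_compose_assoc[OF u0 w0, of f] wu by simp
      ultimately show ?thesis using True u(3) by (simp add: act_def)
    qed (simp add: act_def ch_zero[OF P H])
  qed
  then show ?thesis unfolding strictly_equiv_def using wN c by blast
qed

end


lemma NT: fixes a t M :: int assumes "0 < M" "coprime a M" shows "\<exists>n::nat. M dvd t + int n * a"
proof -
  obtain x where x: "[a * x = 1] (mod M)" using cong_solve_coprime_int[OF assms(2)] by blast
  define n where "n = nat ((- t * x) mod M)"
  have n: "int n = (- t * x) mod M" unfolding n_def using assms(1) by simp
  have "[int n * a = (- t * x) * a] (mod M)" unfolding n by (intro cong_mult cong_refl) (simp add: cong_def)
  also have "(- t * x) * a = - t * (a * x)" by (simp add: algebra_simps)
  also have "[- t * (a * x) = - t * 1] (mod M)" by (intro cong_mult cong_refl x)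
  finally have "[t + int n * a = t + - t * 1] (mod M)" by (intro cong_add cong_refl)
  hence "M dvd t + int n * a - 0" by (simp add: cong_iff_dvd_diff)
  thus ?thesis by auto
qed

lemma NTp: fixes a t :: int assumes "prime p" "\<not> int p dvd a" shows "\<exists>n::nat. int p dvd t + int n * a"
proof -
  have "coprime (int p) a" using assms by (intro prime_imp_coprime) auto
  hence "coprime a (int p)" by (simp add: coprime_commute)
  thus ?thesis using NT[of "int p" a t] assms(1) prime_gt_0_nat by auto
qed

lemma NTq: fixes a t :: int assumes "prime p" "\<not> int p dvd a" shows "\<exists>n::nat. int p ^ 2 dvd t + int n * a"
proof -
  have "coprime (int p) a" using assms by (intro prime_imp_coprime) auto
  hence "coprime a (int p ^ 2)" by (simp add: coprime_commute)
  thus ?thesis using NT[of "int p ^ 2" a t] assms(1) prime_gt_0_nat by auto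
qed

lemma dvd_modq: "int p dvd x mod (int p ^ 2) \<longleftrightarrow> int p dvd x"
  by (rule dvd_mod_iff) simp

definition good :: "nat \<Rightarrow> nat \<Rightarrow> nat \<Rightarrow> ('a::field fps \<Rightarrow> int) \<Rightarrow> bool" where
  "good p l m \<chi> \<longleftrightarrow> charhom p \<chi> \<and> 1 \<le> l \<and> l < m \<and> (\<forall>f\<in>Uj (Suc m). \<chi> f = 0) \<and>
     (\<forall>f\<in>Uj (Suc l). int p dvd \<chi> f) \<and> \<not> int p dvd \<chi> (E l) \<and> \<chi> (E m) \<noteq> 0"

lemma E_U1: "1 \<le> i \<Longrightarrow> E i \<in> Uj 1" using E_in Uj_anti by blast

lemma Uj_U1: "1 \<le> i \<Longrightarrow> f \<in> Uj i \<Longrightarrow> f \<in> Uj 1" using Uj_anti by blast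

context
  fixes p :: nat
  assumes P: "prime p" and C: "card (UNIV :: 'a::{field,finite} set) = p"
begin

lemma act_val:
  fixes \<chi> :: "'a fps \<Rightarrow> int"
  assumes H: "charhom p \<chi>" and h: "h \<in> Uj k" and k: "1 \<le> k" and i: "1 \<le> i"
  shows "\<exists>n g. (of_nat n :: 'a) = of_nat i * h $ k \<and> g \<in> Uj (Suc (i+k)) \<and>
           act (fps_X * h) \<chi> (E i) = (\<chi> (E i) + int n * \<chi> (E (i+k)) + \<chi> g) mod (int p ^ 2)"
proof -
  let ?q = "int p ^ 2"
  define g0 where "g0 = ((E i :: 'a fps) oo (fps_X * h)) * inverse (E i)"
  have e: "g0 \<in> Uj (i+k)" "g0 $ (i+k) = of_nat i * (E i :: 'a fps) $ i * h $ k"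
          "(E i :: 'a fps) oo (fps_X * h) = E i * g0"
    using effect[OF E_in[OF i] i h k] unfolding g0_def by auto
  obtain n where n: "(of_nat n :: 'a) = g0 $ (i+k)" using ofnat_surj[OF P C] by metis
  obtain g where g: "g \<in> Uj (Suc (i+k))" "g0 = (E (i+k))^n * g"
    using level[OF _ e(1) n] i by auto
  have ik: "1 \<le> i + k" using i by simp
  have g1: "g \<in> Uj 1" using Uj_U1[OF _ g(1)] by simp
  have EU: "(E i :: 'a fps) \<in> Uj 1" using E_U1[OF i] .
  have "act (fps_X * h) \<chi> (E i) = \<chi> (E i * g0)" using EU e(3) by (simp add: act_def)
  also have "\<dots> = (\<chi> (E i) + \<chi> g0) mod ?q" using ch_mul[OF P H E_U1[OF i] Uj_U1[OF ik e(1)]] .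
  also have "\<chi> g0 = (\<chi> ((E (i+k))^n) + \<chi> g) mod ?q"
    unfolding g(2) using ch_mul[OF P H Uj_pow[OF E_U1[OF ik]] g1] .
  also have "\<chi> ((E (i+k))^n) = (int n * \<chi> (E (i+k))) mod ?q" using ch_pow[OF P H E_U1[OF ik]] .
  finally have "act (fps_X * h) \<chi> (E i) = (\<chi> (E i) + int n * \<chi> (E (i+k)) + \<chi> g) mod ?q"
    by (simp add: mod_add_left_eq mod_add_right_eq add.assoc)
  moreover have "(of_nat n :: 'a) = of_nat i * h $ k" using n e(2) E_coeff[OF i, where 'a='a] by simp
  ultimately show ?thesis using g(1) by blast
qed

lemma act_val_modp:
  fixes \<chi> :: "'a fps \<Rightarrow> int"
  assumes H: "charhom p \<chi>" and h: "h \<in> Uj k" and k: "1 \<le> k" and i: "1 \<le> i"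
    and L: "\<forall>f\<in>Uj (Suc l). int p dvd \<chi> f" and lt: "l < i + k"
  shows "int p dvd act (fps_X * h) \<chi> (E i) - \<chi> (E i)"
proof -
  obtain n g where ng: "g \<in> Uj (Suc (i+k))"
     "act (fps_X * h) \<chi> (E i) = (\<chi> (E i) + int n * \<chi> (E (i+k)) + \<chi> g) mod (int p ^ 2)"
    using act_val[OF H h k i] by blast
  have "E (i+k) \<in> Uj (Suc l)" using E_in[of "i+k"] Uj_anti[of "Suc l" "i+k"] lt by auto
  hence d1: "int p dvd \<chi> (E (i+k))" using L by blast
  have "g \<in> Uj (Suc l)" using ng(1) Uj_anti[of "Suc l" "Suc (i+k)"] lt by auto
  hence d2: "int p dvd \<chi> g" using L by blast
  let ?x = "\<chi> (E i) + int n * \<chi> (E (i+k)) + \<chi> g"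
  have "(?x mod (int p ^ 2)) mod int p = ?x mod int p" by (rule mod_mod_cancel) simp
  hence "int p dvd ?x mod (int p ^ 2) - ?x" by (simp only: mod_eq_dvd_iff)
  moreover have "int p dvd ?x - \<chi> (E i)" using d1 d2 by simp
  ultimately have "int p dvd (?x mod (int p ^ 2) - ?x) + (?x - \<chi> (E i))" by (rule dvd_add)
  thus ?thesis using ng(2) by simp
qed

end


lemma int_cong_dvd: "[a = b] (mod p) \<Longrightarrow> int p dvd int a - int b"
proof -
  assume "[a = b] (mod p)"
  hence "[int a = int b] (mod int p)" by (simp only: cong_int_iff)
  thus ?thesis by (simp only: cong_iff_dvd_diff)
qed

lemma prime_int_ndvd_mult: "prime p \<Longrightarrow> \<not> int p dvd a \<Longrightarrow> \<not> int p dvd b \<Longrightarrow> \<not> int p dvd a * b"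
  by (simp add: prime_dvd_mult_iff)

lemma h1_props: fixes c :: "'a::field" assumes "1 \<le> k"
  shows "1 + fps_const c * fps_X ^ k \<in> Uj k" "(1 + fps_const c * fps_X ^ k) $ k = c"
  using assms by (auto simp: U_lowz lowz_def)

context
  fixes p :: nat
  assumes P: "prime p" and C: "card (UNIV :: 'a::{field,finite} set) = p"
begin

lemma act_val_exact:
  fixes \<chi> :: "'a fps \<Rightarrow> int"
  assumes H: "charhom p \<chi>" and h: "h \<in> Uj k" and k: "1 \<le> k" and i: "1 \<le> i"
    and M: "\<forall>f\<in>Uj (Suc m). \<chi> f = 0" and lt: "m < i + k"
  shows "act (fps_X * h) \<chi> (E i) = \<chi> (E i)"
proof -
  obtain n g where ng: "g \<in> Uj (Suc (i+k))"
     "act (fps_X * h) \<chi> (E i) = (\<chi> (E i) + int n * \<chi> (E (i+k)) + \<chi> g) mod (int p ^ 2)"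
    using act_val[OF P C H h k i] by blast
  have "(E (i+k) :: 'a fps) \<in> Uj (Suc m)" using E_in[of "i+k"] Uj_anti[of "Suc m" "i+k"] lt by auto
  hence "\<chi> (E (i+k)) = 0" using M by blast
  moreover have "g \<in> Uj (Suc m)" using ng(1) Uj_anti[of "Suc m" "Suc (i+k)"] lt by auto
  hence "\<chi> g = 0" using M by blast
  ultimately show ?thesis using ng(2) ch_mod[OF P H] by simp
qed

lemma good_act:
  fixes \<chi> :: "'a fps \<Rightarrow> int"
  assumes G: "good p l m \<chi>" and u: "u \<in> nottingham"
  shows "good p l m (act u \<chi>)"
proof -
  have H: "charhom p \<chi>" using G by (simp add: good_def)
  obtain h where h: "h \<in> Uj 1" "u = fps_X * h" using nott_decomp[OF u] by blast
  have l1: "1 \<le> l" and lm: "l < m" using G by (auto simp: good_def)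
  have "\<forall>f\<in>Uj (Suc m). act u \<chi> f = 0"
  proof
    fix f :: "'a fps" assume f: "f \<in> Uj (Suc m)"
    have "f oo u \<in> Uj (Suc m)" using compose_Uj[OF f u] .
    thus "act u \<chi> f = 0" using G Uj_U1[OF _ f] by (simp add: act_def good_def)
  qed
  moreover have "\<forall>f\<in>Uj (Suc l). int p dvd act u \<chi> f"
  proof
    fix f :: "'a fps" assume f: "f \<in> Uj (Suc l)"
    have "f oo u \<in> Uj (Suc l)" using compose_Uj[OF f u] .
    thus "int p dvd act u \<chi> f" using G Uj_U1[OF _ f] by (simp add: act_def good_def)
  qed
  moreover have "\<not> int p dvd act u \<chi> (E l)"
  proof
    assume a: "int p dvd act u \<chi> (E l)"
    have "int p dvd act (fps_X * h) \<chi> (E l) - \<chi> (E l)"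
      using act_val_modp[OF P C H h(1) le_refl l1, of l] G by (simp add: good_def)
    hence d: "int p dvd act u \<chi> (E l) - \<chi> (E l)" using h(2) by simp
    have "int p dvd act u \<chi> (E l) - (act u \<chi> (E l) - \<chi> (E l))" using dvd_diff[OF a d] .
    hence "int p dvd \<chi> (E l)" by simp
    thus False using G by (simp add: good_def)
  qed
  moreover have "act u \<chi> (E m) \<noteq> 0"
    using act_val_exact[OF H h(1) le_refl, of m m] G lm l1 h(2) by (simp add: good_def)
  ultimately show ?thesis using G act_charhom[OF P H u] by (simp add: good_def)
qed

lemma mk_h:
  fixes \<chi> :: "'a fps \<Rightarrow> int" and c :: 'a
  assumes H: "charhom p \<chi>" and k: "1 \<le> k" and f0: "f0 \<in> Uj (Suc k)"
    and d: "int p ^ 2 dvd \<chi> (1 + fps_const c * fps_X ^ k) + int n2 * \<chi> f0"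
  shows "\<exists>h. h \<in> Uj k \<and> h $ k = c \<and> \<chi> h = 0"
proof -
  let ?h1 = "1 + fps_const c * fps_X ^ k :: 'a fps"
  let ?h = "?h1 * f0 ^ n2"
  have h1: "?h1 \<in> Uj k" "?h1 $ k = c" using h1_props[OF k] by auto
  have fn: "f0 ^ n2 \<in> Uj (Suc k)" using Uj_pow[OF f0] .
  hence fnk: "f0 ^ n2 \<in> Uj k" using Uj_anti[of k "Suc k"] by auto
  have "(f0 ^ n2) $ k = 0" using fn k by (simp add: Uj_def)
  hence hk: "?h $ k = c" using Uj_coeff_mult[OF h1(1) fnk k] h1(2) by simp
  have hU: "?h \<in> Uj k" using Uj_mult[OF h1(1) fnk] .
  have f01: "f0 \<in> Uj 1" using Uj_U1[OF _ f0] by simp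
  have "\<chi> ?h = (\<chi> ?h1 + \<chi> (f0 ^ n2)) mod (int p ^ 2)"
    using ch_mul[OF P H Uj_U1[OF k h1(1)] Uj_U1[OF k fnk]] .
  also have "\<dots> = (\<chi> ?h1 + int n2 * \<chi> f0) mod (int p ^ 2)"
    using ch_pow[OF P H f01] by (simp add: mod_add_right_eq)
  also have "\<dots> = 0" using d by simp
  finally show ?thesis using hU hk by blast
qed

lemma se_act:
  fixes \<chi> :: "'a fps \<Rightarrow> int"
  assumes "h \<in> Uj k" "1 \<le> k" "\<chi> h = 0"
  shows "strictly_equiv \<chi> (act (fps_X * h) \<chi>)"
proof -
  have u: "fps_X * h \<in> nottingham" by (rule nott_X_mult[OF Uj_U1[OF assms(2,1)]])
  have "\<chi> (fps_shift 1 (fps_X * h)) = 0" by (subst shift_X_mult) (rule assms(3))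
  thus ?thesis unfolding strictly_equiv_def using u by blast
qed

lemma step1:
  fixes \<chi> :: "'a fps \<Rightarrow> int"
  assumes G: "good p l m \<chi>" and j: "1 \<le> j" "j < l" "\<not> p dvd j"
  shows "\<exists>\<psi>. strictly_equiv \<chi> \<psi> \<and> good p l m \<psi> \<and> int p dvd \<psi> (E j) \<and>
             (\<forall>i. j < i \<longrightarrow> int p dvd \<psi> (E i) - \<chi> (E i))"
proof -
  have H: "charhom p \<chi>" using G by (simp add: good_def)
  have L: "\<forall>f\<in>Uj (Suc l). int p dvd \<chi> f" and El: "\<not> int p dvd \<chi> (E l)" using G by (auto simp: good_def)
  define k where "k = l - j"
  have k: "1 \<le> k" "j + k = l" using j unfolding k_def by auto
  have jn: "\<not> int p dvd int j" using j(3) by simp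
  obtain n1 where n1: "int p dvd \<chi> (E j) + int n1 * (int j * \<chi> (E l))"
    using NTp[OF P prime_int_ndvd_mult[OF P jn El]] by blast
  define c :: 'a where "c = of_nat n1"
  obtain n2 where n2: "int p ^ 2 dvd \<chi> (1 + fps_const c * fps_X ^ k) + int n2 * \<chi> (E l)"
    using NTq[OF P El] by blast
  have f0: "(E l :: 'a fps) \<in> Uj (Suc k)" using E_in[of l] Uj_anti[of "Suc k" l] k j by auto
  obtain h where h: "h \<in> Uj k" "h $ k = c" "\<chi> h = 0" using mk_h[OF H k(1) f0 n2] by blast
  define \<psi> where "\<psi> = act (fps_X * h) \<chi>"
  have se: "strictly_equiv \<chi> \<psi>" unfolding \<psi>_def by (rule se_act[where \<chi>=\<chi>, OF h(1) k(1) h(3)])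
  have G': "good p l m \<psi>" unfolding \<psi>_def by (rule good_act[OF G nott_X_mult[OF Uj_U1[OF k(1) h(1)]]])
  obtain n g where ng: "(of_nat n :: 'a) = of_nat j * h $ k" "g \<in> Uj (Suc (j+k))"
     "\<psi> (E j) = (\<chi> (E j) + int n * \<chi> (E (j+k)) + \<chi> g) mod (int p ^ 2)"
    using act_val[OF P C H h(1) k(1) j(1)] unfolding \<psi>_def by blast
  have "(of_nat n :: 'a) = of_nat (j * n1)" using ng(1) h(2) c_def by simp
  hence "[n = j * n1] (mod p)" using ofnat_eq[OF P C] by blast
  hence dn: "int p dvd int n - int j * int n1" using int_cong_dvd by fastforce
  have dg: "int p dvd \<chi> g" using L ng(2) k(2) by auto
  have "\<chi> (E j) + int n * \<chi> (E l) + \<chi> g =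
        (\<chi> (E j) + int n1 * (int j * \<chi> (E l))) + (int n - int j * int n1) * \<chi> (E l) + \<chi> g"
    by (simp add: algebra_simps)
  also have "int p dvd \<dots>" by (rule dvd_add[OF dvd_add[OF n1 dvd_mult2[OF dn]] dg])
  finally have "int p dvd \<psi> (E j)" using ng(3) k(2) dvd_modq by simp
  moreover have "\<forall>i. j < i \<longrightarrow> int p dvd \<psi> (E i) - \<chi> (E i)"
    using act_val_modp[OF P C H h(1) k(1) _ L] k(2) j(1) unfolding \<psi>_def by auto
  ultimately show ?thesis using se G' by blast
qed

lemma step2:
  fixes \<chi> :: "'a fps \<Rightarrow> int"
  assumes G: "good p l m \<chi>" and j: "1 \<le> j" "j < m - l" "\<not> p dvd j"
  shows "\<exists>\<psi>. strictly_equiv \<chi> \<psi> \<and> good p l m \<psi> \<and> 0 \<le> \<psi> (E j) \<and> \<psi> (E j) < int p \<and>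
             (\<forall>i. 1 \<le> i \<longrightarrow> int p dvd \<psi> (E i) - \<chi> (E i)) \<and> (\<forall>i. j < i \<longrightarrow> \<psi> (E i) = \<chi> (E i))"
proof -
  have H: "charhom p \<chi>" using G by (simp add: good_def)
  have L: "\<forall>f\<in>Uj (Suc l). int p dvd \<chi> f" and M: "\<forall>f\<in>Uj (Suc m). \<chi> f = 0"
    and Em0: "\<chi> (E m) \<noteq> 0" and lm: "l < m" using G by (auto simp: good_def)
  define k where "k = m - j"
  have k: "1 \<le> k" "j + k = m" "l < k" "Suc k \<le> m" using j lm unfolding k_def by auto
  have "(E m :: 'a fps) \<in> Uj (Suc l)" using E_in[of m] Uj_anti[of "Suc l" m] lm by auto
  hence "int p dvd \<chi> (E m)" using L by blast
  then obtain e where e: "\<chi> (E m) = int p * e" by blast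
  have pp: "0 < int p" using P prime_gt_0_nat by auto
  have "0 \<le> \<chi> (E m)" "\<chi> (E m) < int p * int p" using ch_range'[OF P H] by (auto simp: power2_eq_square)
  hence "0 \<le> int p * e" "int p * e < int p * int p" "e \<noteq> 0" using e Em0 by auto
  hence "0 < e" "e < int p" using pp by (auto simp: zero_le_mult_iff mult_less_cancel_left_pos)
  hence en: "\<not> int p dvd e" using zdvd_imp_le by fastforce
  have jn: "\<not> int p dvd int j" using j(3) by simp
  define v where "v = \<chi> (E j)"
  define r where "r = v mod int p"
  define s where "s = v div int p"
  have vrs: "v = r + int p * s" unfolding r_def s_def by simp
  obtain n1 where n1: "int p dvd s + int n1 * (int j * e)"
    using NTp[OF P prime_int_ndvd_mult[OF P jn en]] by blast
  define c :: 'a where "c = of_nat n1"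
  let ?h1 = "1 + fps_const c * fps_X ^ k :: 'a fps"
  have "?h1 \<in> Uj (Suc l)" using h1_props(1)[OF k(1), of c] Uj_anti[of "Suc l" k] k by auto
  then obtain t where t: "\<chi> ?h1 = int p * t" using L by blast
  obtain n2 where n2: "int p dvd t + int n2 * e" using NTp[OF P en] by blast
  have "int p * int p dvd int p * (t + int n2 * e)" using n2 by simp
  hence n2': "int p ^ 2 dvd \<chi> ?h1 + int n2 * \<chi> (E m)" using t e by (simp add: power2_eq_square algebra_simps)
  have f0: "(E m :: 'a fps) \<in> Uj (Suc k)" using E_in[of m] Uj_anti[of "Suc k" m] k by auto
  obtain h where h: "h \<in> Uj k" "h $ k = c" "\<chi> h = 0" using mk_h[OF H k(1) f0 n2'] by blast
  define \<psi> where "\<psi> = act (fps_X * h) \<chi>"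
  have se: "strictly_equiv \<chi> \<psi>" unfolding \<psi>_def by (rule se_act[where \<chi>=\<chi>, OF h(1) k(1) h(3)])
  have G': "good p l m \<psi>" unfolding \<psi>_def by (rule good_act[OF G nott_X_mult[OF Uj_U1[OF k(1) h(1)]]])
  obtain n g where ng: "(of_nat n :: 'a) = of_nat j * h $ k" "g \<in> Uj (Suc (j+k))"
     "\<psi> (E j) = (\<chi> (E j) + int n * \<chi> (E (j+k)) + \<chi> g) mod (int p ^ 2)"
    using act_val[OF P C H h(1) k(1) j(1)] unfolding \<psi>_def by blast
  have "(of_nat n :: 'a) = of_nat (j * n1)" using ng(1) h(2) c_def by simp
  hence "[n = j * n1] (mod p)" using ofnat_eq[OF P C] by blast
  hence dn: "int p dvd int n - int j * int n1" using int_cong_dvd by fastforce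
  have g0: "\<chi> g = 0" using M ng(2) k(2) by auto
  have eq: "v + int n * \<chi> (E m) - r = int p * (s + int n1 * (int j * e)) + int p * (int n - int j * int n1) * e"
    using vrs e by (simp add: algebra_simps)
  have "int p * int p dvd int p * (s + int n1 * (int j * e))" using n1 by simp
  moreover have "int p * int p dvd int p * (int n - int j * int n1) * e"
    using dn by (simp add: mult.assoc)
  ultimately have "int p ^ 2 dvd v + int n * \<chi> (E m) - r" unfolding eq power2_eq_square by (rule dvd_add)
  hence "(v + int n * \<chi> (E m)) mod (int p ^ 2) = r mod (int p ^ 2)" by (simp add: mod_eq_dvd_iff)
  moreover have "0 \<le> r" "r < int p" unfolding r_def using pp by auto
  moreover have "int p \<le> int p ^ 2" using pp by (simp add: power2_eq_square)
  ultimately have "\<psi> (E j) = r" using ng(3) g0 k(2) v_def by simp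
  moreover have "\<forall>i. 1 \<le> i \<longrightarrow> int p dvd \<psi> (E i) - \<chi> (E i)"
    using act_val_modp[OF P C H h(1) k(1) _ L] k(3) unfolding \<psi>_def by auto
  moreover have "\<forall>i. j < i \<longrightarrow> \<psi> (E i) = \<chi> (E i)"
    using act_val_exact[OF H h(1) k(1) _ M] k(2) unfolding \<psi>_def by auto
  ultimately show ?thesis using se G' \<open>0 \<le> r\<close> \<open>r < int p\<close> by auto
qed

end


definition red1 :: "nat \<Rightarrow> nat \<Rightarrow> ('a::field fps \<Rightarrow> int) \<Rightarrow> bool" where
  "red1 p l \<psi> \<longleftrightarrow> (\<forall>j. 1 \<le> j \<and> j < l \<and> \<not> p dvd j \<longrightarrow> int p dvd \<psi> (E j))"
definition red2 :: "nat \<Rightarrow> nat \<Rightarrow> nat \<Rightarrow> ('a::field fps \<Rightarrow> int) \<Rightarrow> bool" where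
  "red2 p l m \<psi> \<longleftrightarrow> (\<forall>j. 1 \<le> j \<and> j < m - l \<and> \<not> p dvd j \<longrightarrow> 0 \<le> \<psi> (E j) \<and> \<psi> (E j) < int p)"

lemma good_charhom: "good p l m \<chi> \<Longrightarrow> charhom p \<chi>" by (simp add: good_def)

context
  fixes p :: nat
  assumes P: "prime p" and C: "card (UNIV :: 'a::{field,finite} set) = p"
begin

lemma stage1_gen:
  "\<forall>\<chi> :: 'a fps \<Rightarrow> int. good p l m \<chi> \<longrightarrow> (\<exists>\<psi>. strictly_equiv \<chi> \<psi> \<and> good p l m \<psi> \<and>
      (\<forall>j. l - d \<le> j \<and> 1 \<le> j \<and> j < l \<and> \<not> p dvd j \<longrightarrow> int p dvd \<psi> (E j)))"
proof (induction d)
  case 0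
  show ?case
  proof (intro allI impI)
    fix \<chi> :: "'a fps \<Rightarrow> int" assume G: "good p l m \<chi>"
    show "\<exists>\<psi>. strictly_equiv \<chi> \<psi> \<and> good p l m \<psi> \<and>
      (\<forall>j. l - 0 \<le> j \<and> 1 \<le> j \<and> j < l \<and> \<not> p dvd j \<longrightarrow> int p dvd \<psi> (E j))"
      by (rule exI[of _ \<chi>]) (use se_refl[OF P good_charhom[OF G]] G in auto)
  qed
next
  case (Suc d)
  show ?case
  proof (intro allI impI)
    fix \<chi> :: "'a fps \<Rightarrow> int" assume G: "good p l m \<chi>"
    obtain \<psi> where \<psi>: "strictly_equiv \<chi> \<psi>" "good p l m \<psi>"
        "\<forall>j. l - d \<le> j \<and> 1 \<le> j \<and> j < l \<and> \<not> p dvd j \<longrightarrow> int p dvd \<psi> (E j)"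
      using Suc G by blast
    define j where "j = l - Suc d"
    show "\<exists>\<psi>. strictly_equiv \<chi> \<psi> \<and> good p l m \<psi> \<and>
      (\<forall>j. l - Suc d \<le> j \<and> 1 \<le> j \<and> j < l \<and> \<not> p dvd j \<longrightarrow> int p dvd \<psi> (E j))"
    proof (cases "1 \<le> j \<and> j < l \<and> \<not> p dvd j")
      case True
      obtain \<psi>' where \<psi>': "strictly_equiv \<psi> \<psi>'" "good p l m \<psi>'" "int p dvd \<psi>' (E j)"
          "\<forall>i. j < i \<longrightarrow> int p dvd \<psi>' (E i) - \<psi> (E i)"
        using step1[OF P C \<psi>(2)] True by blast
      have "strictly_equiv \<chi> \<psi>'" using se_trans[OF P good_charhom[OF G] \<psi>(1) \<psi>'(1)] .
      moreover have "int p dvd \<psi>' (E i)" if "l - Suc d \<le> i" "1 \<le> i" "i < l" "\<not> p dvd i" for i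
      proof (cases "i = j")
        case True then show ?thesis using \<psi>'(3) by simp
      next
        case False
        hence "j < i" "l - d \<le> i" using that j_def by auto
        hence "int p dvd \<psi>' (E i) - \<psi> (E i)" "int p dvd \<psi> (E i)" using \<psi>'(4) \<psi>(3) that by auto
        from dvd_add[OF this] show ?thesis by simp
      qed
      ultimately show ?thesis using \<psi>'(2) by blast
    next
      case False
      have "int p dvd \<psi> (E i)" if "l - Suc d \<le> i" "1 \<le> i" "i < l" "\<not> p dvd i" for i
      proof -
        have "i \<noteq> j" using False that by auto
        hence "l - d \<le> i" using that j_def by auto
        thus ?thesis using \<psi>(3) that by auto
      qed
      then show ?thesis using \<psi>(1,2) by blast
    qed
  qed
qed

lemma stage1: "good p l m (\<chi> :: 'a fps \<Rightarrow> int) \<Longrightarrow> \<exists>\<psi>. strictly_equiv \<chi> \<psi> \<and> good p l m \<psi> \<and> red1 p l \<psi>"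
  using stage1_gen[of l m l] unfolding red1_def by auto

lemma stage2_gen:
  "\<forall>\<chi> :: 'a fps \<Rightarrow> int. good p l m \<chi> \<and> red1 p l \<chi> \<longrightarrow> (\<exists>\<psi>. strictly_equiv \<chi> \<psi> \<and> good p l m \<psi> \<and> red1 p l \<psi> \<and>
      (\<forall>j. (m - l) - d \<le> j \<and> 1 \<le> j \<and> j < m - l \<and> \<not> p dvd j \<longrightarrow> 0 \<le> \<psi> (E j) \<and> \<psi> (E j) < int p))"
proof (induction d)
  case 0
  show ?case
  proof (intro allI impI)
    fix \<chi> :: "'a fps \<Rightarrow> int" assume G: "good p l m \<chi> \<and> red1 p l \<chi>"
    show "\<exists>\<psi>. strictly_equiv \<chi> \<psi> \<and> good p l m \<psi> \<and> red1 p l \<psi> \<and>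
      (\<forall>j. (m - l) - 0 \<le> j \<and> 1 \<le> j \<and> j < m - l \<and> \<not> p dvd j \<longrightarrow> 0 \<le> \<psi> (E j) \<and> \<psi> (E j) < int p)"
      by (rule exI[of _ \<chi>]) (use se_refl[OF P good_charhom[OF conjunct1[OF G]]] G in auto)
  qed
next
  case (Suc d)
  show ?case
  proof (intro allI impI)
    fix \<chi> :: "'a fps \<Rightarrow> int" assume G: "good p l m \<chi> \<and> red1 p l \<chi>"
    obtain \<psi> where \<psi>: "strictly_equiv \<chi> \<psi>" "good p l m \<psi>" "red1 p l \<psi>"
        "\<forall>j. (m - l) - d \<le> j \<and> 1 \<le> j \<and> j < m - l \<and> \<not> p dvd j \<longrightarrow> 0 \<le> \<psi> (E j) \<and> \<psi> (E j) < int p"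
      using Suc G by blast
    define j where "j = (m - l) - Suc d"
    show "\<exists>\<psi>. strictly_equiv \<chi> \<psi> \<and> good p l m \<psi> \<and> red1 p l \<psi> \<and>
      (\<forall>j. (m - l) - Suc d \<le> j \<and> 1 \<le> j \<and> j < m - l \<and> \<not> p dvd j \<longrightarrow> 0 \<le> \<psi> (E j) \<and> \<psi> (E j) < int p)"
    proof (cases "1 \<le> j \<and> j < m - l \<and> \<not> p dvd j")
      case True
      obtain \<psi>' where \<psi>': "strictly_equiv \<psi> \<psi>'" "good p l m \<psi>'" "0 \<le> \<psi>' (E j)" "\<psi>' (E j) < int p"
          "\<forall>i. 1 \<le> i \<longrightarrow> int p dvd \<psi>' (E i) - \<psi> (E i)" "\<forall>i. j < i \<longrightarrow> \<psi>' (E i) = \<psi> (E i)"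
        using step2[OF P C \<psi>(2)] True by blast
      have "strictly_equiv \<chi> \<psi>'" using se_trans[OF P good_charhom[OF conjunct1[OF G]] \<psi>(1) \<psi>'(1)] .
      moreover have "red1 p l \<psi>'" unfolding red1_def
      proof (intro allI impI)
        fix i assume i: "1 \<le> i \<and> i < l \<and> \<not> p dvd i"
        hence "int p dvd \<psi>' (E i) - \<psi> (E i)" "int p dvd \<psi> (E i)" using \<psi>'(5) \<psi>(3) by (auto simp: red1_def)
        from dvd_add[OF this] show "int p dvd \<psi>' (E i)" by simp
      qed
      moreover have "0 \<le> \<psi>' (E i) \<and> \<psi>' (E i) < int p" if "(m - l) - Suc d \<le> i" "1 \<le> i" "i < m - l" "\<not> p dvd i" for i
      proof (cases "i = j")
        case True then show ?thesis using \<psi>'(3,4) by simp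
      next
        case False
        hence "j < i" "(m - l) - d \<le> i" using that j_def by auto
        thus ?thesis using \<psi>'(6) \<psi>(4) that by auto
      qed
      ultimately show ?thesis using \<psi>'(2) by blast
    next
      case False
      have "0 \<le> \<psi> (E i) \<and> \<psi> (E i) < int p" if "(m - l) - Suc d \<le> i" "1 \<le> i" "i < m - l" "\<not> p dvd i" for i
      proof -
        have "i \<noteq> j" using False that by auto
        hence "(m - l) - d \<le> i" using that j_def by auto
        thus ?thesis using \<psi>(4) that by auto
      qed
      then show ?thesis using \<psi>(1,2,3) by blast
    qed
  qed
qed

lemma reduce: "good p l m (\<chi> :: 'a fps \<Rightarrow> int) \<Longrightarrow>
   \<exists>\<psi>. strictly_equiv \<chi> \<psi> \<and> good p l m \<psi> \<and> red1 p l \<psi> \<and> red2 p l m \<psi>"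
proof -
  assume G: "good p l m \<chi>"
  obtain \<psi> where \<psi>: "strictly_equiv \<chi> \<psi>" "good p l m \<psi>" "red1 p l \<psi>" using stage1[OF G] by blast
  obtain \<psi>' where \<psi>': "strictly_equiv \<psi> \<psi>'" "good p l m \<psi>'" "red1 p l \<psi>'"
     "\<forall>j. (m - l) - (m - l) \<le> j \<and> 1 \<le> j \<and> j < m - l \<and> \<not> p dvd j \<longrightarrow> 0 \<le> \<psi>' (E j) \<and> \<psi>' (E j) < int p"
    using stage2_gen[of l m "m - l"] \<psi>(2,3) by blast
  have "strictly_equiv \<chi> \<psi>'" using se_trans[OF P good_charhom[OF G] \<psi>(1) \<psi>'(1)] .
  moreover have "red2 p l m \<psi>'" using \<psi>'(4) unfolding red2_def by auto
  ultimately show ?thesis using \<psi>'(2,3) by blast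
qed

end


context
  fixes p :: nat
  assumes P: "prime p" and C: "card (UNIV :: 'a::{field,finite} set) = p"
begin

lemma ch_decomp:
  fixes \<chi> :: "'a fps \<Rightarrow> int"
  assumes H: "charhom p \<chi>" and i: "1 \<le> i" and f: "f \<in> Uj i"
  shows "\<exists>n g. g \<in> Uj (Suc i) \<and> \<chi> f = ((int n * \<chi> (E i)) mod (int p ^ 2) + \<chi> g) mod (int p ^ 2)"
proof -
  obtain n where n: "(of_nat n :: 'a) = f $ i" using ofnat_surj[OF P C] by metis
  obtain g where g: "g \<in> Uj (Suc i)" "f = (E i)^n * g" using level[OF i f n] by blast
  have g1: "g \<in> Uj 1" using Uj_U1[OF _ g(1)] by simp
  have "\<chi> f = (\<chi> ((E i)^n) + \<chi> g) mod (int p ^ 2)"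
    unfolding g(2) using ch_mul[OF P H Uj_pow[OF E_U1[OF i]] g1] .
  also have "\<chi> ((E i)^n) = (int n * \<chi> (E i)) mod (int p ^ 2)" using ch_pow[OF P H E_U1[OF i]] .
  finally show ?thesis using g(1) by blast
qed

lemma good_of_A:
  fixes \<chi> :: "'a fps \<Rightarrow> int"
  assumes A: "\<chi> \<in> surj_chars_of_type p l m"
  shows "good p l m \<chi>"
proof -
  have IC: "is_character p \<chi>" and T: "has_type p \<chi> l m"
    using A by (auto simp: surj_chars_of_type_def surjective_character_def)
  have H: "charhom p \<chi>" using IC by (simp add: is_character_def charhom_def)
  have l1: "1 \<le> l" and m1: "1 \<le> m" using T by (auto simp: has_type_def)
  obtain f1 where f1: "f1 \<in> Uj l" "\<not> int p dvd \<chi> f1" using T by (auto simp: has_type_def)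
  obtain f2 where f2: "f2 \<in> Uj m" "\<chi> f2 \<noteq> 0" using T by (auto simp: has_type_def)
  have L: "\<forall>f\<in>Uj (Suc l). int p dvd \<chi> f" using T by (auto simp: has_type_def)
  have M: "\<forall>f\<in>Uj (Suc m). \<chi> f = 0" using T by (auto simp: has_type_def)
  have El: "\<not> int p dvd \<chi> (E l)"
  proof
    assume d: "int p dvd \<chi> (E l)"
    obtain n g where ng: "g \<in> Uj (Suc l)" "\<chi> f1 = ((int n * \<chi> (E l)) mod (int p ^ 2) + \<chi> g) mod (int p ^ 2)"
      using ch_decomp[OF H l1 f1(1)] by blast
    have d1: "int p dvd (int n * \<chi> (E l)) mod (int p ^ 2)"
      by (simp only: dvd_modq) (rule dvd_mult[OF d])
    have d2: "int p dvd \<chi> g" using L ng(1) by blast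
    have "int p dvd ((int n * \<chi> (E l)) mod (int p ^ 2) + \<chi> g)" by (rule dvd_add[OF d1 d2])
    hence "int p dvd \<chi> f1" unfolding ng(2) by (simp only: dvd_modq)
    thus False using f1(2) by simp
  qed
  have Em: "\<chi> (E m) \<noteq> 0"
  proof
    assume d: "\<chi> (E m) = 0"
    obtain n g where ng: "g \<in> Uj (Suc m)" "\<chi> f2 = ((int n * \<chi> (E m)) mod (int p ^ 2) + \<chi> g) mod (int p ^ 2)"
      using ch_decomp[OF H m1 f2(1)] by blast
    have "\<chi> g = 0" using M ng(1) by blast
    thus False using ng(2) d f2(2) by simp
  qed
  have lm: "l \<le> m"
  proof (rule ccontr)
    assume "\<not> l \<le> m"
    hence "f1 \<in> Uj (Suc m)" using f1(1) Uj_anti[of "Suc m" l] by auto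
    thus False using M f1(2) by auto
  qed
  have "l \<noteq> m"
  proof
    assume lm': "l = m"
    have p2: "2 \<le> p" using P prime_ge_2_nat by blast
    have "(E l :: 'a fps) ^ p = E (p * l)" using E_frob[OF P C] .
    moreover have "(E (p * l) :: 'a fps) \<in> Uj (Suc m)"
    proof -
      have "2 * l \<le> p * l" using mult_le_mono1[OF p2] .
      hence "Suc l \<le> p * l" using l1 by linarith
      hence "Suc m \<le> p * l" using lm' by simp
      moreover have "1 \<le> p * l" using l1 p2 by simp
      ultimately show ?thesis using E_in[of "p*l"] Uj_anti[of "Suc m" "p * l"] by blast
    qed
    ultimately have "\<chi> ((E l) ^ p) = 0" using M by simp
    hence "(int p * \<chi> (E l)) mod (int p ^ 2) = 0" using ch_pow[OF P H E_U1[OF l1]] by simp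
    hence "int p ^ 2 dvd int p * \<chi> (E l)" by (simp only: mod_eq_0_iff_dvd)
    hence "int p * int p dvd int p * \<chi> (E l)" by (simp only: power2_eq_square)
    moreover have "int p \<noteq> 0" using prime_gt_0_nat[OF P] by simp
    ultimately have "int p dvd \<chi> (E l)" using dvd_times_left_cancel_iff by blast
    thus False using El by simp
  qed
  thus ?thesis using H l1 lm M L El Em by (simp add: good_def)
qed

lemma good_l_ndvd:
  fixes \<chi> :: "'a fps \<Rightarrow> int"
  assumes G: "good p l m \<chi>" shows "\<not> p dvd l"
proof
  assume "p dvd l"
  then obtain l' where l': "l = p * l'" by blast
  have H: "charhom p \<chi>" and l1: "1 \<le> l" using G by (auto simp: good_def)
  have l'1: "1 \<le> l'" using l' l1 by (cases l') auto
  have "\<chi> (E l) = \<chi> ((E l') ^ p)" unfolding l' using E_frob[OF P C, of l'] by simp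
  also have "\<dots> = (int p * \<chi> (E l')) mod (int p ^ 2)" using ch_pow[OF P H E_U1[OF l'1]] .
  finally have "int p dvd \<chi> (E l)" using dvd_modq by simp
  thus False using G by (simp add: good_def)
qed

lemma det:
  fixes \<psi>1 \<psi>2 :: "'a fps \<Rightarrow> int"
  assumes H1: "charhom p \<psi>1" and H2: "charhom p \<psi>2"
    and M1: "\<forall>f\<in>Uj (Suc m). \<psi>1 f = 0" and M2: "\<forall>f\<in>Uj (Suc m). \<psi>2 f = 0"
    and V: "\<forall>j. 1 \<le> j \<and> j \<le> m \<and> \<not> p dvd j \<longrightarrow> \<psi>1 (E j) = \<psi>2 (E j)"
  shows "\<psi>1 = \<psi>2"
proof -
  have p2: "2 \<le> p" using P prime_ge_2_nat by blast
  have EE: "1 \<le> i \<Longrightarrow> \<psi>1 (E i) = \<psi>2 (E i)" for i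
  proof (induction i rule: less_induct)
    case (less i)
    show ?case
    proof (cases "m < i")
      case True
      hence "(E i :: 'a fps) \<in> Uj (Suc m)" using E_in[of i] Uj_anti[of "Suc m" i] less.prems by auto
      then show ?thesis using M1 M2 by auto
    next
      case False
      show ?thesis
      proof (cases "p dvd i")
        case False then show ?thesis using V less.prems \<open>\<not> m < i\<close> by auto
      next
        case True
        then obtain i' where i': "i = p * i'" by blast
        have i'1: "1 \<le> i'" using i' less.prems by (cases i') auto
        have "i' < i" using i' i'1 p2 by simp
        hence IH: "\<psi>1 (E i') = \<psi>2 (E i')" using less.IH i'1 by blast
        have "\<psi>1 (E i) = (int p * \<psi>1 (E i')) mod (int p ^ 2)"
          unfolding i' E_frob[OF P C, symmetric] using ch_pow[OF P H1 E_U1[OF i'1]] .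
        moreover have "\<psi>2 (E i) = (int p * \<psi>2 (E i')) mod (int p ^ 2)"
          unfolding i' E_frob[OF P C, symmetric] using ch_pow[OF P H2 E_U1[OF i'1]] .
        ultimately show ?thesis using IH by simp
      qed
    qed
  qed
  have U: "d \<le> m \<Longrightarrow> \<forall>f\<in>Uj (Suc m - d). \<psi>1 f = \<psi>2 f" for d
  proof (induction d)
    case 0 then show ?case using M1 M2 by simp
  next
    case (Suc d)
    define i where "i = m - d"
    have i1: "1 \<le> i" and si: "Suc i = Suc m - d" using Suc.prems unfolding i_def by auto
    show ?case
    proof
      fix f :: "'a fps" assume "f \<in> Uj (Suc m - Suc d)"
      hence f: "f \<in> Uj i" unfolding i_def by simp
      obtain n where n: "(of_nat n :: 'a) = f $ i" using ofnat_surj[OF P C] by metis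
      obtain g where g: "g \<in> Uj (Suc i)" "f = (E i)^n * g" using level[OF i1 f n] by blast
      have g1: "g \<in> Uj 1" using Uj_U1[OF _ g(1)] by simp
      have gg: "\<psi>1 g = \<psi>2 g" using Suc g(1) si by auto
      have "\<psi>1 f = (\<psi>1 ((E i)^n) + \<psi>1 g) mod (int p ^ 2)"
        unfolding g(2) using ch_mul[OF P H1 Uj_pow[OF E_U1[OF i1]] g1] .
      also have "\<psi>1 ((E i)^n) = (int n * \<psi>1 (E i)) mod (int p ^ 2)" using ch_pow[OF P H1 E_U1[OF i1]] .
      also have "\<psi>1 (E i) = \<psi>2 (E i)" using EE[OF i1] .
      also have "(int n * \<psi>2 (E i)) mod (int p ^ 2) = \<psi>2 ((E i)^n)" using ch_pow[OF P H2 E_U1[OF i1]] ..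
      also have "(\<psi>2 ((E i)^n) + \<psi>1 g) mod (int p ^ 2) = \<psi>2 f"
        unfolding g(2) gg using ch_mul[OF P H2 Uj_pow[OF E_U1[OF i1]] g1] ..
      finally show "\<psi>1 f = \<psi>2 f" .
    qed
  qed
  show ?thesis
  proof (rule ext)
    fix f
    show "\<psi>1 f = \<psi>2 f"
    proof (cases "f \<in> Uj 1")
      case True then show ?thesis using U[of m] by simp
    next
      case False then show ?thesis using ch_zero[OF P H1] ch_zero[OF P H2] by simp
    qed
  qed
qed

end


definition Sset :: "nat \<Rightarrow> nat \<Rightarrow> nat \<Rightarrow> nat \<Rightarrow> int set" where
  "Sset p l m j = {v. 0 \<le> v \<and> v < int p ^ 2 \<and> (j \<noteq> l \<longrightarrow> int p dvd v) \<and> (j = l \<longrightarrow> \<not> int p dvd v) \<and>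
      (j < m - l \<longrightarrow> v < int p) \<and> (j = m \<longrightarrow> v \<noteq> 0)}"

definition cfun :: "nat \<Rightarrow> nat \<Rightarrow> nat \<Rightarrow> nat \<Rightarrow> nat" where
  "cfun p l m j = (if j = l then p - 1 else 1) * ((if j = m then p - 1 else 1) * (if m - l \<le> j \<and> j < m then p else 1))"

lemma div_lt: "0 < (p::int) \<Longrightarrow> v < p * p \<Longrightarrow> v div p < p"
proof -
  assume a: "0 < p" "v < p * p"
  have "p * (v div p) + v mod p = v" by (rule mult_div_mod_eq)
  moreover have "0 \<le> v mod p" using a by simp
  ultimately have "p * (v div p) < p * p" using a by linarith
  thus ?thesis using a by (simp add: mult_less_cancel_left_pos)
qed

lemma Sset_finite: "finite (Sset p l m j)"
  by (rule finite_subset[of _ "{0..<int p ^ 2}"]) (auto simp: Sset_def)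

lemma card_S:
  assumes P: "prime p" and lm: "l < m" and jm: "j \<le> m"
  shows "card (Sset p l m j) \<le> cfun p l m j"
proof -
  have pp: "0 < int p" using prime_gt_0_nat[OF P] by simp
  define X where "X = (if j = l then {1..<int p} else {0})"
  define Y where "Y = (if j < m - l then {0} else if j = m then {1..<int p} else {0..<int p})"
  define F where "F v = (v mod int p, v div int p)" for v
  have inj: "inj_on F (Sset p l m j)"
  proof (rule inj_onI)
    fix v w assume "F v = F w"
    hence "v mod int p = w mod int p" "v div int p = w div int p" by (auto simp: F_def)
    thus "v = w" by (metis mult_div_mod_eq)
  qed
  have img: "F ` Sset p l m j \<subseteq> X \<times> Y"
  proof
    fix x assume "x \<in> F ` Sset p l m j"
    then obtain v where v: "v \<in> Sset p l m j" "x = F v" by blast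
    have v0: "0 \<le> v" and vq: "v < int p * int p" using v(1) by (auto simp: Sset_def power2_eq_square)
    have "v mod int p \<in> X"
    proof (cases "j = l")
      case True
      hence "\<not> int p dvd v" using v(1) by (simp add: Sset_def)
      hence "v mod int p \<noteq> 0" by (simp add: dvd_eq_mod_eq_0)
      moreover have "0 \<le> v mod int p" "v mod int p < int p" using pp by auto
      ultimately show ?thesis using True by (simp add: X_def)
    next
      case False
      hence "int p dvd v" using v(1) by (simp add: Sset_def)
      thus ?thesis using False by (simp add: X_def dvd_eq_mod_eq_0)
    qed
    moreover have "v div int p \<in> Y"
    proof -
      have lt: "v div int p < int p" using div_lt[OF pp vq] .
      have ge: "0 \<le> v div int p" using v0 pp by (simp add: pos_imp_zdiv_nonneg_iff)
      show ?thesis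
      proof (cases "j < m - l")
        case True
        hence "v < int p" using v(1) by (simp add: Sset_def)
        hence "v div int p = 0" using v0 by simp
        thus ?thesis using True by (simp add: Y_def)
      next
        case nlt: False
        show ?thesis
        proof (cases "j = m")
          case True
          hence "v \<noteq> 0" "int p dvd v" using v(1) lm by (auto simp: Sset_def)
          hence "int p \<le> v" using v0 zdvd_imp_le by fastforce
          hence "0 < v div int p" using pos_imp_zdiv_pos_iff[OF pp] by simp
          thus ?thesis using True nlt lt by (simp add: Y_def)
        next
          case False then show ?thesis using nlt lt ge by (simp add: Y_def)
        qed
      qed
    qed
    ultimately show "x \<in> X \<times> Y" using v(2) by (simp add: F_def)
  qed
  have fin: "finite (X \<times> Y)" by (simp add: X_def Y_def)
  have np: "nat (int p - 1) = p - 1" by (cases p) auto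
  have "card (Sset p l m j) \<le> card (X \<times> Y)" by (rule card_inj_on_le[OF inj img fin])
  also have "\<dots> = card X * card Y" by (rule card_cartesian_product)
  also have "card X = (if j = l then p - 1 else 1)" by (simp add: X_def np)
  also have "card Y = (if j = m then p - 1 else 1) * (if m - l \<le> j \<and> j < m then p else 1)"
    using jm lm by (auto simp: Y_def np)
  finally show ?thesis by (simp add: cfun_def)
qed

lemma prod_cfun:
  assumes P: "prime p" and l1: "1 \<le> l" and lm: "l < m" and nl: "\<not> p dvd l"
  shows "(\<Prod>j\<in>{j. 1 \<le> j \<and> j \<le> m \<and> \<not> p dvd j}. cfun p l m j) = bound_B p l m"
proof -
  let ?J = "{j. 1 \<le> j \<and> j \<le> m \<and> \<not> p dvd j}"
  have fin: "finite ?J" by (rule finite_subset[of _ "{..m}"]) auto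
  have "(\<Prod>j\<in>?J. cfun p l m j) = (\<Prod>j\<in>?J. if j = l then p - 1 else 1) *
      ((\<Prod>j\<in>?J. if j = m then p - 1 else 1) * (\<Prod>j\<in>?J. if m - l \<le> j \<and> j < m then p else 1))"
    unfolding cfun_def prod.distrib ..
  also have "(\<Prod>j\<in>?J. if j = l then p - 1 else 1) = p - 1" using fin l1 lm nl by simp
  also have "(\<Prod>j\<in>?J. if j = m then p - 1 else 1) = (if p dvd m then 1 else p - 1)"
    using fin lm by simp
  also have "(\<Prod>j\<in>?J. if m - l \<le> j \<and> j < m then p else 1) = p ^ card {j \<in> {m - l..m - 1}. \<not> p dvd j}"
  proof -
    have "(\<Prod>j\<in>?J. if m - l \<le> j \<and> j < m then p else 1) = (\<Prod>j\<in>?J \<inter> {j. m - l \<le> j \<and> j < m}. p)"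
      by (subst prod.If_cases[OF fin]) simp
    also have "?J \<inter> {j. m - l \<le> j \<and> j < m} = {j \<in> {m - l..m - 1}. \<not> p dvd j}"
      using lm by auto
    finally show ?thesis by simp
  qed
  finally show ?thesis unfolding bound_B_def by (simp add: power2_eq_square)
qed


theorem corollary4p3:
  fixes p l m :: nat
  assumes "prime p" and "card (UNIV :: ('a::{field,finite}) set) = p"
  shows "finite (surj_chars_of_type p l m // {(\<chi>, \<psi>). \<chi> \<in> surj_chars_of_type p l m \<and>
             \<psi> \<in> surj_chars_of_type p l m \<and> strictly_equiv (\<chi> :: 'a fps \<Rightarrow> int) \<psi>})
     \<and> card (surj_chars_of_type p l m // {(\<chi>, \<psi>). \<chi> \<in> surj_chars_of_type p l m \<and>
             \<psi> \<in> surj_chars_of_type p l m \<and> strictly_equiv (\<chi> :: 'a fps \<Rightarrow> int) \<psi>})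
        \<le> bound_B p l m"
proof -
  note P = assms(1) and C = assms(2)
  define A where "A = (surj_chars_of_type p l m :: ('a fps \<Rightarrow> int) set)"
  define R where "R = {(\<chi>, \<psi>). \<chi> \<in> A \<and> \<psi> \<in> A \<and> strictly_equiv (\<chi> :: 'a fps \<Rightarrow> int) \<psi>}"
  define J where "J = {j. 1 \<le> j \<and> j \<le> m \<and> \<not> p dvd j}"
  have finJ: "finite J" unfolding J_def by (rule finite_subset[of _ "{..m}"]) auto
  have main: "finite (A // R) \<and> card (A // R) \<le> bound_B p l m"
  proof (cases "A = {}")
    case True then show ?thesis by simp
  next
    case False
    then obtain \<chi>0 where \<chi>0: "\<chi>0 \<in> A" by blast
    have G0: "good p l m \<chi>0" using good_of_A[OF P C] \<chi>0 A_def by blast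
    have l1: "1 \<le> l" and lm: "l < m" using G0 by (auto simp: good_def)
    have nl: "\<not> p dvd l" using good_l_ndvd[OF P C G0] .
    define Q where "Q K \<psi> \<longleftrightarrow> (\<exists>\<chi>\<in>A. K = R `` {\<chi>} \<and> strictly_equiv \<chi> \<psi> \<and> good p l m \<psi> \<and>
        red1 p l \<psi> \<and> red2 p l m \<psi>)" for K and \<psi> :: "'a fps \<Rightarrow> int"
    define \<rho> where "\<rho> K = (SOME \<psi>. Q K \<psi>)" for K
    have \<rho>: "Q K (\<rho> K)" if K: "K \<in> A // R" for K
    proof -
      obtain \<chi> where \<chi>: "\<chi> \<in> A" "K = R `` {\<chi>}" using K by (auto elim: quotientE)
      have "good p l m \<chi>" using good_of_A[OF P C] \<chi>(1) A_def by blast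
      then obtain \<psi> where "strictly_equiv \<chi> \<psi> \<and> good p l m \<psi> \<and> red1 p l \<psi> \<and> red2 p l m \<psi>"
        using reduce[OF P C] by blast
      hence "Q K \<psi>" unfolding Q_def using \<chi> by blast
      thus ?thesis unfolding \<rho>_def by (rule someI[of "Q K"])
    qed
    have cls: "R `` {\<chi>} = {z \<in> A. strictly_equiv \<psi> z}"
      if "\<chi> \<in> A" "strictly_equiv \<chi> \<psi>" "good p l m \<psi>" for \<chi> \<psi>
    proof -
      have H\<chi>: "charhom p \<chi>" using good_of_A[OF P C] that(1) A_def good_charhom by blast
      have H\<psi>: "charhom p \<psi>" using that(3) good_charhom by blast
      have s: "strictly_equiv \<psi> \<chi>" using se_sym[OF P H\<chi> that(2)] .
      have eqz: "z \<in> R `` {\<chi>} \<longleftrightarrow> z \<in> {z \<in> A. strictly_equiv \<psi> z}" for z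
      proof
        assume "z \<in> R `` {\<chi>}"
        hence z: "z \<in> A" "strictly_equiv \<chi> z" unfolding R_def by auto
        show "z \<in> {z \<in> A. strictly_equiv \<psi> z}" using z se_trans[OF P H\<psi> s z(2)] by blast
      next
        assume "z \<in> {z \<in> A. strictly_equiv \<psi> z}"
        hence z: "z \<in> A" "strictly_equiv \<psi> z" by auto
        show "z \<in> R `` {\<chi>}" using z that(1) se_trans[OF P H\<chi> that(2) z(2)] unfolding R_def by blast
      qed
      show ?thesis by (rule Set.set_eqI, rule eqz)
    qed
    define F where "F K = restrict (\<lambda>j. \<rho> K (E j)) J" for K
    have img: "F ` (A // R) \<subseteq> PiE J (Sset p l m)"
    proof
      fix x assume "x \<in> F ` (A // R)"
      then obtain K where K: "K \<in> A // R" "x = F K" by blast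
      let ?\<psi> = "\<rho> K"
      have QK: "Q K (\<rho> K)" by (rule \<rho>[OF K(1)])
      hence "\<exists>\<chi>\<in>A. K = R `` {\<chi>} \<and> strictly_equiv \<chi> (\<rho> K) \<and> good p l m (\<rho> K) \<and>
        red1 p l (\<rho> K) \<and> red2 p l m (\<rho> K)" unfolding Q_def .
      hence G: "good p l m ?\<psi>" "red1 p l ?\<psi>" "red2 p l m ?\<psi>" by auto
      have H: "charhom p ?\<psi>" using G(1) good_charhom by blast
      have "?\<psi> (E j) \<in> Sset p l m j" if j: "j \<in> J" for j
      proof -
        have j1: "1 \<le> j" "j \<le> m" "\<not> p dvd j" using j J_def by auto
        have r: "0 \<le> ?\<psi> (E j)" "?\<psi> (E j) < int p ^ 2" using ch_range'[OF P H] by auto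
        have a: "j \<noteq> l \<longrightarrow> int p dvd ?\<psi> (E j)"
        proof
          assume "j \<noteq> l"
          show "int p dvd ?\<psi> (E j)"
          proof (cases "j < l")
            case True then show ?thesis using G(2) j1 by (simp add: red1_def)
          next
            case False
            hence "(E j :: 'a fps) \<in> Uj (Suc l)" using \<open>j \<noteq> l\<close> E_in[of j] Uj_anti[of "Suc l" j] j1 by auto
            then show ?thesis using G(1) by (simp add: good_def)
          qed
        qed
        have b: "j = l \<longrightarrow> \<not> int p dvd ?\<psi> (E j)" using G(1) by (simp add: good_def)
        have c: "j < m - l \<longrightarrow> ?\<psi> (E j) < int p" using G(3) j1 by (simp add: red2_def)
        have d: "j = m \<longrightarrow> ?\<psi> (E j) \<noteq> 0" using G(1) by (simp add: good_def)
        show ?thesis unfolding Sset_def using r a b c d by blast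
      qed
      thus "x \<in> PiE J (Sset p l m)" using K(2) by (simp add: F_def)
    qed
    have inj: "inj_on F (A // R)"
    proof (rule inj_onI)
      fix K1 K2 assume K1: "K1 \<in> A // R" and K2: "K2 \<in> A // R" and FK: "F K1 = F K2"
      have "\<exists>\<chi>\<in>A. K1 = R `` {\<chi>} \<and> strictly_equiv \<chi> (\<rho> K1) \<and> good p l m (\<rho> K1) \<and>
        red1 p l (\<rho> K1) \<and> red2 p l m (\<rho> K1)" using \<rho>[OF K1] unfolding Q_def .
      then obtain \<chi>1 where c1a: "\<chi>1 \<in> A" and c1b: "K1 = R `` {\<chi>1} \<and> strictly_equiv \<chi>1 (\<rho> K1) \<and> good p l m (\<rho> K1) \<and>
        red1 p l (\<rho> K1) \<and> red2 p l m (\<rho> K1)" by (rule bexE)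
      have "\<exists>\<chi>\<in>A. K2 = R `` {\<chi>} \<and> strictly_equiv \<chi> (\<rho> K2) \<and> good p l m (\<rho> K2) \<and>
        red1 p l (\<rho> K2) \<and> red2 p l m (\<rho> K2)" using \<rho>[OF K2] unfolding Q_def .
      then obtain \<chi>2 where c2a: "\<chi>2 \<in> A" and c2b: "K2 = R `` {\<chi>2} \<and> strictly_equiv \<chi>2 (\<rho> K2) \<and> good p l m (\<rho> K2) \<and>
        red1 p l (\<rho> K2) \<and> red2 p l m (\<rho> K2)" by (rule bexE)
      have k1: "K1 = R `` {\<chi>1}" and s1: "strictly_equiv \<chi>1 (\<rho> K1)" and g1: "good p l m (\<rho> K1)"
        using c1b by auto
      have k2: "K2 = R `` {\<chi>2}" and s2: "strictly_equiv \<chi>2 (\<rho> K2)" and g2: "good p l m (\<rho> K2)"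
        using c2b by auto
      have M1: "\<forall>f\<in>Uj (Suc m). \<rho> K1 f = 0" using g1 unfolding good_def by blast
      have M2: "\<forall>f\<in>Uj (Suc m). \<rho> K2 f = 0" using g2 unfolding good_def by blast
      have V: "\<forall>j. 1 \<le> j \<and> j \<le> m \<and> \<not> p dvd j \<longrightarrow> \<rho> K1 (E j) = \<rho> K2 (E j)"
      proof (intro allI impI)
        fix j assume "1 \<le> j \<and> j \<le> m \<and> \<not> p dvd j"
        hence jJ: "j \<in> J" by (simp add: J_def)
        have "F K1 j = F K2 j" using FK by simp
        thus "\<rho> K1 (E j) = \<rho> K2 (E j)" using jJ unfolding F_def restrict_def by simp
      qed
      have eq: "\<rho> K1 = \<rho> K2"
        by (rule det[OF P C good_charhom[OF g1] good_charhom[OF g2] M1 M2 V])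
      have "K1 = R `` {\<chi>1}" by (rule k1)
      also have "\<dots> = {z \<in> A. strictly_equiv (\<rho> K1) z}" by (rule cls[OF c1a s1 g1])
      also have "\<dots> = {z \<in> A. strictly_equiv (\<rho> K2) z}" by (simp only: eq)
      also have "\<dots> = R `` {\<chi>2}" by (rule cls[OF c2a s2 g2, symmetric])
      also have "\<dots> = K2" by (rule k2[symmetric])
      finally show "K1 = K2" .
    qed
    have finPi: "finite (PiE J (Sset p l m))" using finJ Sset_finite by (intro finite_PiE) auto
    have "card (A // R) \<le> card (PiE J (Sset p l m))" by (rule card_inj_on_le[OF inj img finPi])
    also have "\<dots> = (\<Prod>j\<in>J. card (Sset p l m j))" by (rule card_PiE[OF finJ])
    also have "\<dots> \<le> (\<Prod>j\<in>J. cfun p l m j)" by (rule prod_mono) (auto simp: J_def intro: card_S[OF P lm])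
    also have "\<dots> = bound_B p l m" unfolding J_def by (rule prod_cfun[OF P l1 lm nl])
    finally show ?thesis using inj_on_finite[OF inj img finPi] by blast
  qed
  then show ?thesis unfolding A_def R_def .
qed


end
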